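(* Let $G=(V,E)$ be a connected simple undirected graph and $c\in\mathbb{R}^n$ a vector with strictly positive components satisfying $\sum_{j\in S}c_j^2=\sum_{j\in N(S)}c_j^2$ for every $S\in\mathcal{S}_1$. Let $\mathcal{F}$ be the family of sets $S\in\mathcal{S}_2$ such that (a) there is no partition $S=S'\cup S''$ of $S$ into two nonempty disjoint sets with $N(S')\cap N(S'')=\emptyset$, and (b) there is no stable set $S'$ with $S\subsetneq S'$ and $N(S')=N(S)$. Then $\sum_{j\in S}c_j^2<\sum_{j\in N(S)}c_j^2$ holds for every $S\in\mathcal{S}_2$ if and only if it holds for every $S\in\mathcal{F}$.
   Context: For $S\subseteq V$, $N(S)=\{j\in V\setminus S:\ \exists\, i\in S \text{ with } \{i,j\}\in E\}$. A set $S\subseteq V$ is stable if no two elements of $S$ are joined by an edge. $\mathcal{S}_1$ is the family of nonempty stable sets $S\subseteq V$ such that there is no edge $\{k,\ell\}\in E$ with $k\notin S$ and $\ell\notin S$; $\mathcal{S}_2$ is the family of nonempty stable sets $S\subseteq V$ such that there exists an edge $\{k,\ell\}\in E$ with $k\notin S$ and $\ell\notin S$. *)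

theory Defs
  imports Complex_Main
begin

definition simple_graph :: "'a set \<Rightarrow> 'a set set \<Rightarrow> bool" where
  "simple_graph V E \<longleftrightarrow> finite V \<and> (\<forall>e\<in>E. e \<subseteq> V \<and> card e = 2)"

definition adj_rel :: "'a set set \<Rightarrow> ('a \<times> 'a) set" where
  "adj_rel E = {(i, j). {i, j} \<in> E}"

definition connected_graph :: "'a set \<Rightarrow> 'a set set \<Rightarrow> bool" where
  "connected_graph V E \<longleftrightarrow> (\<forall>i\<in>V. \<forall>j\<in>V. (i, j) \<in> (adj_rel E)\<^sup>*)"

definition nbhd :: "'a set \<Rightarrow> 'a set set \<Rightarrow> 'a set \<Rightarrow> 'a set" where
  "nbhd V E S = {j \<in> V - S. \<exists>i\<in>S. {i, j} \<in> E}"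

definition stable :: "'a set \<Rightarrow> 'a set set \<Rightarrow> 'a set \<Rightarrow> bool" where
  "stable V E S \<longleftrightarrow> S \<subseteq> V \<and> (\<forall>i\<in>S. \<forall>j\<in>S. {i, j} \<notin> E)"

definition S1 :: "'a set \<Rightarrow> 'a set set \<Rightarrow> 'a set set" where
  "S1 V E = {S. S \<noteq> {} \<and> stable V E S \<and> \<not> (\<exists>k l. {k, l} \<in> E \<and> k \<notin> S \<and> l \<notin> S)}"

definition S2 :: "'a set \<Rightarrow> 'a set set \<Rightarrow> 'a set set" where
  "S2 V E = {S. S \<noteq> {} \<and> stable V E S \<and> (\<exists>k l. {k, l} \<in> E \<and> k \<notin> S \<and> l \<notin> S)}"

definition F_family :: "'a set \<Rightarrow> 'a set set \<Rightarrow> 'a set set" where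
  "F_family V E = {S \<in> S2 V E.
     \<not> (\<exists>S' S''. S' \<noteq> {} \<and> S'' \<noteq> {} \<and> S' \<inter> S'' = {} \<and> S' \<union> S'' = S
            \<and> nbhd V E S' \<inter> nbhd V E S'' = {})
   \<and> \<not> (\<exists>S'. stable V E S' \<and> S \<subset> S' \<and> nbhd V E S' = nbhd V E S)}"

end

theory Submission
  imports Defs
begin

lemma nbhd_union_stable:
  assumes "stable V E (A \<union> B)"
  shows "nbhd V E (A \<union> B) = nbhd V E A \<union> nbhd V E B"
  using assms unfolding nbhd_def stable_def by blast

lemma has_nb:
  assumes "connected_graph V E" "simple_graph V E" "{k, l} \<in> E" "v \<in> V"
  shows "\<exists>u. {v, u} \<in> E"
proof -
  have kV: "k \<in> V" using assms unfolding simple_graph_def by blast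
  have "(v, k) \<in> (adj_rel E)\<^sup>*" using assms(1,4) kV unfolding connected_graph_def by blast
  then show ?thesis
  proof (cases rule: converse_rtranclE)
    case base then show ?thesis using assms(3) by blast
  next
    case (step y) then show ?thesis unfolding adj_rel_def by blast
  qed
qed

lemma key:
  fixes c :: "'a \<Rightarrow> real"
  assumes fin: "finite V"
    and edges: "\<forall>e\<in>E. e \<subseteq> V"
    and nb: "\<forall>v\<in>V. \<exists>u. {v, u} \<in> E"
    and pos: "\<forall>j\<in>V. c j > 0"
    and s1: "\<forall>S\<in>S1 V E. (\<Sum>j\<in>S. (c j)^2) = (\<Sum>j\<in>nbhd V E S. (c j)^2)"
  shows "S \<in> S2 V E \<Longrightarrow> (\<Sum>j\<in>nbhd V E S. (c j)^2) \<le> (\<Sum>j\<in>S. (c j)^2)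
     \<Longrightarrow> \<exists>T\<in>F_family V E. (\<Sum>j\<in>nbhd V E T. (c j)^2) \<le> (\<Sum>j\<in>T. (c j)^2)"
proof (induction "card (nbhd V E S)" arbitrary: S rule: less_induct)
  case less
  define w where "w X = (\<Sum>j\<in>X. (c j)^2)" for X
  have wnn: "0 \<le> (c j)^2" for j by simp
  let ?Fam = "{X. stable V E X \<and> S \<subseteq> X \<and> nbhd V E X = nbhd V E S}"
  have finFam: "finite ?Fam"
    by (rule finite_subset[of _ "Pow V"]) (auto simp: stable_def fin)
  have SV: "S \<subseteq> V" using less.prems unfolding S2_def stable_def by blast
  have SF: "S \<in> ?Fam" using less.prems unfolding S2_def by blast
  obtain S' where S'F: "S' \<in> ?Fam" and S'm: "card S' = Max (card ` ?Fam)"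
  proof -
    have "Max (card ` ?Fam) \<in> card ` ?Fam" using finFam SF by (intro Max_in) auto
    then show ?thesis using that by (metis (no_types, lifting) imageE)
  qed
  have maxc: "card Y \<le> card S'" if "Y \<in> ?Fam" for Y
    using Max_ge[of "card ` ?Fam" "card Y"] finFam that S'm by auto
  have S'st: "stable V E S'" and SS': "S \<subseteq> S'" and NS': "nbhd V E S' = nbhd V E S"
    using S'F by auto
  have S'V: "S' \<subseteq> V" using S'st unfolding stable_def by blast
  have finS': "finite S'" using S'V fin finite_subset by blast
  have wS': "w (nbhd V E S') \<le> w S'"
  proof -
    have "w S \<le> w S'" unfolding w_def using SS' finS' by (intro sum_mono2) auto
    then show ?thesis using less.prems(2) NS' unfolding w_def by simp
  qed
  have S'S2: "S' \<in> S2 V E"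
  proof -
    have ne: "S' \<noteq> {}" using SS' less.prems unfolding S2_def by blast
    have "\<exists>k l. {k, l} \<in> E \<and> k \<notin> S' \<and> l \<notin> S'"
    proof (rule ccontr)
      assume nx: "\<not> ?thesis"
      then have "S' \<in> S1 V E" using ne S'st unfolding S1_def by blast
      then have eq: "w S' = w (nbhd V E S')" using s1 unfolding w_def by blast
      have "w S' = w (S' - S) + w S" unfolding w_def using SS' finS'
        by (simp add: sum.subset_diff)
      moreover have "S' - S \<noteq> {}"
        using less.prems nx SS' unfolding S2_def by blast
      then have "w (S' - S) > 0" unfolding w_def using finS' pos S'V
        by (intro sum_pos) (auto, metis subsetD less_irrefl)
      ultimately show False using eq NS' less.prems(2) unfolding w_def by simp
    qed
    then show ?thesis using ne S'st unfolding S2_def by blast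
  qed
  show ?case
  proof (cases "\<exists>A B. A \<noteq> {} \<and> B \<noteq> {} \<and> A \<inter> B = {} \<and> A \<union> B = S'
            \<and> nbhd V E A \<inter> nbhd V E B = {}")
    case False
    have "\<not> (\<exists>S''. stable V E S'' \<and> S' \<subset> S'' \<and> nbhd V E S'' = nbhd V E S')"
    proof
      assume "\<exists>S''. stable V E S'' \<and> S' \<subset> S'' \<and> nbhd V E S'' = nbhd V E S'"
      then obtain S'' where h: "stable V E S''" "S' \<subset> S''" "nbhd V E S'' = nbhd V E S'" by blast
      have "S'' \<in> ?Fam" using h SS' NS' by auto
      then have "card S'' \<le> card S'" by (rule maxc)
      moreover have "finite S''" using h(1) fin finite_subset unfolding stable_def by blast
      then have "card S' < card S''" using h(2) by (simp add: psubset_card_mono)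
      ultimately show False by simp
    qed
    then have "S' \<in> F_family V E" using False S'S2 unfolding F_family_def by blast
    then show ?thesis using wS' unfolding w_def by blast
  next
    case True
    then obtain A B where AB: "A \<noteq> {}" "B \<noteq> {}" "A \<inter> B = {}" "A \<union> B = S'"
      "nbhd V E A \<inter> nbhd V E B = {}" by blast
    have claim: "\<exists>T\<in>F_family V E. (\<Sum>j\<in>nbhd V E T. (c j)^2) \<le> (\<Sum>j\<in>T. (c j)^2)" if X: "X \<noteq> {}" "Y \<noteq> {}" "X \<inter> Y = {}" "X \<union> Y = S'"
      "nbhd V E X \<inter> nbhd V E Y = {}" "w (nbhd V E X) \<le> w X" for X Y
    proof -
      obtain y where y: "y \<in> Y" using X by blast
      then have yV: "y \<in> V" using X S'V by blast
      obtain u where u: "{y, u} \<in> E" using nb yV by blast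
      have uV: "u \<in> V" using u edges by blast
      have uS': "u \<notin> S'" using S'st u y X(4) unfolding stable_def by blast
      have yX: "y \<notin> X" using y X(3) by blast
      have XS2: "X \<in> S2 V E"
      proof -
        have "stable V E X" using S'st X(4) unfolding stable_def by blast
        moreover have "{y, u} \<in> E \<and> y \<notin> X \<and> u \<notin> X" using u yX uS' X(4) by blast
        ultimately show ?thesis using X(1) unfolding S2_def by blast
      qed
      have uNY: "u \<in> nbhd V E Y" using uV uS' X(4) y u unfolding nbhd_def
        by (auto simp: insert_commute)
      have NU: "nbhd V E S' = nbhd V E X \<union> nbhd V E Y"
        using nbhd_union_stable[of V E X Y] S'st X(4) by simp
      have finN: "finite (nbhd V E S)" using fin unfolding nbhd_def by simp
      have "nbhd V E X \<subset> nbhd V E S" using NU NS' uNY X(5) by blast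
      then have "card (nbhd V E X) < card (nbhd V E S)" using finN psubset_card_mono by blast
      then show ?thesis using less.hyps XS2 X(6) unfolding w_def by blast
    qed
    have finA: "finite A" "finite B" using AB(4) finS' by auto
    have finNA: "finite (nbhd V E A)" "finite (nbhd V E B)" using fin unfolding nbhd_def by auto
    have "nbhd V E S' = nbhd V E A \<union> nbhd V E B"
      using nbhd_union_stable[of V E A B] S'st AB(4) by simp
    then have "w (nbhd V E S') = w (nbhd V E A) + w (nbhd V E B)"
      unfolding w_def using finNA AB(5) by (simp add: sum.union_disjoint)
    moreover have "w S' = w A + w B"
      unfolding w_def using finA AB(3,4) by (auto simp add: sum.union_disjoint)
    ultimately have "w (nbhd V E A) \<le> w A \<or> w (nbhd V E B) \<le> w B" using wS' by linarith
    then show ?thesis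
    proof
      assume "w (nbhd V E A) \<le> w A" then show ?thesis using claim[of A B] AB by blast
    next
      assume "w (nbhd V E B) \<le> w B" then show ?thesis using claim[of B A] AB
        by (simp add: Int_commute Un_commute)
    qed
  qed
qed

theorem mainTheorem2:
  fixes n :: nat and E :: "nat set set" and c :: "nat \<Rightarrow> real"
  assumes "simple_graph {1..n} E"
    and "connected_graph {1..n} E"
    and "\<forall>j\<in>{1..n}. c j > 0"
    and "\<forall>S\<in>S1 {1..n} E. (\<Sum>j\<in>S. (c j)^2) = (\<Sum>j\<in>nbhd {1..n} E S. (c j)^2)"
  shows "(\<forall>S\<in>S2 {1..n} E. (\<Sum>j\<in>S. (c j)^2) < (\<Sum>j\<in>nbhd {1..n} E S. (c j)^2))
     \<longleftrightarrow> (\<forall>S\<in>F_family {1..n} E. (\<Sum>j\<in>S. (c j)^2) < (\<Sum>j\<in>nbhd {1..n} E S. (c j)^2))"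
proof
  assume "\<forall>S\<in>S2 {1..n} E. (\<Sum>j\<in>S. (c j)^2) < (\<Sum>j\<in>nbhd {1..n} E S. (c j)^2)"
  then show "\<forall>S\<in>F_family {1..n} E. (\<Sum>j\<in>S. (c j)^2) < (\<Sum>j\<in>nbhd {1..n} E S. (c j)^2)"
    unfolding F_family_def by blast
next
  assume H: "\<forall>S\<in>F_family {1..n} E. (\<Sum>j\<in>S. (c j)^2) < (\<Sum>j\<in>nbhd {1..n} E S. (c j)^2)"
  show "\<forall>S\<in>S2 {1..n} E. (\<Sum>j\<in>S. (c j)^2) < (\<Sum>j\<in>nbhd {1..n} E S. (c j)^2)"
  proof (rule ccontr)
    assume "\<not> ?thesis"
    then obtain S where S: "S \<in> S2 {1..n} E"
      "(\<Sum>j\<in>nbhd {1..n} E S. (c j)^2) \<le> (\<Sum>j\<in>S. (c j)^2)" by force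
    obtain k l where kl: "{k, l} \<in> E" using S(1) unfolding S2_def by blast
    have nb: "\<forall>v\<in>{1..n}. \<exists>u. {v, u} \<in> E" using has_nb[OF assms(2,1) kl] by blast
    have edges: "\<forall>e\<in>E. e \<subseteq> {1..n}" using assms(1) unfolding simple_graph_def by blast
    obtain T where "T \<in> F_family {1..n} E"
      "(\<Sum>j\<in>nbhd {1..n} E T. (c j)^2) \<le> (\<Sum>j\<in>T. (c j)^2)"
      using key[OF _ edges nb assms(3,4) S] by blast
    then show False using H by fastforce
  qed
qed

end
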